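(* Let $G$ be a connected graph, $S$ a separating vertex set of $G$, and $V_1,\ldots,V_k$ the vertex sets of the connected components of $G-S$. Suppose each vertex of $S$ has a neighbor in each $V_i$, $1\leq i\leq k$. Then every connected forcing set of $G$ contains a vertex from at least $k-1$ of the sets $V_1,\ldots,V_k$. Moreover, if either $k=2$ and $Z(G[V_i])>|S|$ for both $i\in\{1,2\}$, or $k\geq 3$, then every connected forcing set of $G$ contains a vertex of $S$.
   Context: Zero forcing: given a graph $H$ and a set $T$ of initially colored vertices, if a colored vertex $u$ has exactly one uncolored neighbor $v$, then $v$ becomes colored. $T$ is a zero forcing set if repeated application colors all vertices; $Z(H)$ is the minimum size of a zero forcing set of $H$. A connected forcing set is a zero forcing set $T$ with $G[T]$ connected. *)

theory Defs
  imports Main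
begin

text \<open>Induced subgraphs G[W] are represented by
the pair (W, E): all notions below only use edges between vertices of the
given vertex set.\<close>

definition simple_graph :: "'a set \<Rightarrow> ('a \<Rightarrow> 'a \<Rightarrow> bool) \<Rightarrow> bool" where
  "simple_graph V E \<longleftrightarrow> finite V \<and> (\<forall>x y. E x y \<longrightarrow> E y x) \<and> (\<forall>x. \<not> E x x)
     \<and> (\<forall>x y. E x y \<longrightarrow> x \<in> V \<and> y \<in> V)"

definition edges_in :: "'a set \<Rightarrow> ('a \<Rightarrow> 'a \<Rightarrow> bool) \<Rightarrow> ('a \<times> 'a) set" where
  "edges_in W E = {(x, y). x \<in> W \<and> y \<in> W \<and> E x y}"

definition connected_on :: "'a set \<Rightarrow> ('a \<Rightarrow> 'a \<Rightarrow> bool) \<Rightarrow> bool" where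
  "connected_on W E \<longleftrightarrow> W \<noteq> {} \<and> (\<forall>x\<in>W. \<forall>y\<in>W. (x, y) \<in> (edges_in W E)\<^sup>*)"

definition components :: "'a set \<Rightarrow> ('a \<Rightarrow> 'a \<Rightarrow> bool) \<Rightarrow> 'a set set" where
  "components W E = {{y. (x, y) \<in> (edges_in W E)\<^sup>*} | x. x \<in> W}"

definition separating :: "'a set \<Rightarrow> ('a \<Rightarrow> 'a \<Rightarrow> bool) \<Rightarrow> 'a set \<Rightarrow> bool" where
  "separating V E S \<longleftrightarrow> S \<subseteq> V \<and> card (components (V - S) E) \<ge> 2"

text \<open>Final colored set of the zero forcing process in G[W] starting from T:
a colored vertex u all of whose neighbours in W except v are colored forces v.\<close>
inductive_set zf_closure :: "'a set \<Rightarrow> ('a \<Rightarrow> 'a \<Rightarrow> bool) \<Rightarrow> 'a set \<Rightarrow> 'a set"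
  for W E T where
  init: "v \<in> T \<Longrightarrow> v \<in> W \<Longrightarrow> v \<in> zf_closure W E T"
| force: "u \<in> zf_closure W E T \<Longrightarrow> v \<in> W \<Longrightarrow> E u v \<Longrightarrow>
          (\<forall>w\<in>W. E u w \<and> w \<noteq> v \<longrightarrow> w \<in> zf_closure W E T) \<Longrightarrow> v \<in> zf_closure W E T"

definition zero_forcing_set :: "'a set \<Rightarrow> ('a \<Rightarrow> 'a \<Rightarrow> bool) \<Rightarrow> 'a set \<Rightarrow> bool" where
  "zero_forcing_set W E T \<longleftrightarrow> T \<subseteq> W \<and> zf_closure W E T = W"

definition Z :: "'a set \<Rightarrow> ('a \<Rightarrow> 'a \<Rightarrow> bool) \<Rightarrow> nat" where
  "Z W E = Min {card T | T. zero_forcing_set W E T}"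

definition connected_forcing_set :: "'a set \<Rightarrow> ('a \<Rightarrow> 'a \<Rightarrow> bool) \<Rightarrow> 'a set \<Rightarrow> bool" where
  "connected_forcing_set V E T \<longleftrightarrow> zero_forcing_set V E T \<and> connected_on T E"

end

theory Submission
  imports Defs
begin

lemma comp_reach_in:
  assumes "(x0, y) \<in> (edges_in W E)\<^sup>*" "x0 \<in> W" shows "y \<in> W"
  using assms by (induction rule: rtrancl_induct) (auto simp: edges_in_def)

lemma comp_sub: "C \<in> components W E \<Longrightarrow> C \<subseteq> W"
  unfolding components_def using comp_reach_in by fastforce

lemma comp_ne: "C \<in> components W E \<Longrightarrow> C \<noteq> {}"
  unfolding components_def by auto

lemma comp_closed:
  assumes "C \<in> components W E" "x \<in> C" "y \<in> W" "E x y" shows "y \<in> C"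
proof -
  from assms(1) obtain x0 where C: "C = {y. (x0, y) \<in> (edges_in W E)\<^sup>*}" "x0 \<in> W"
    unfolding components_def by auto
  have "x \<in> W" using comp_sub assms by blast
  hence "(x, y) \<in> edges_in W E" using assms by (auto simp: edges_in_def)
  thus ?thesis using assms(2) C by (auto intro: rtrancl_into_rtrancl)
qed

lemma comp_eq:
  assumes sym: "\<forall>x y. E x y \<longrightarrow> E y x"
    and "C1 \<in> components W E" "C2 \<in> components W E" "x \<in> C1" "x \<in> C2"
  shows "C1 = C2"
proof -
  let ?R = "edges_in W E"
  have sR: "sym ?R" using sym unfolding sym_def edges_in_def by auto
  hence sR2: "sym (?R\<^sup>*)" by (rule sym_rtrancl)
  from assms(2) obtain a where a: "C1 = {y. (a, y) \<in> ?R\<^sup>*}"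
    unfolding components_def by auto
  from assms(3) obtain b where b: "C2 = {y. (b, y) \<in> ?R\<^sup>*}"
    unfolding components_def by auto
  have "(a, x) \<in> ?R\<^sup>*" "(b, x) \<in> ?R\<^sup>*" using a b assms by auto
  hence ab: "(a, b) \<in> ?R\<^sup>*" "(b, a) \<in> ?R\<^sup>*" using sR2
    by (meson rtrancl_trans symD)+
  show ?thesis unfolding a b using ab by (auto intro: rtrancl_trans)
qed

definition zstep :: "'a set \<Rightarrow> ('a \<Rightarrow> 'a \<Rightarrow> bool) \<Rightarrow> 'a set \<Rightarrow> 'a set" where
  "zstep W E X = X \<union> {v\<in>W. \<exists>u\<in>X. E u v \<and> (\<forall>w\<in>W. E u w \<and> w \<noteq> v \<longrightarrow> w \<in> X)}"

definition zstage :: "'a set \<Rightarrow> ('a \<Rightarrow> 'a \<Rightarrow> bool) \<Rightarrow> 'a set \<Rightarrow> nat \<Rightarrow> 'a set" where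
  "zstage W E T n = (zstep W E ^^ n) (T \<inter> W)"

lemma zstage_Suc: "zstage W E T (Suc n) = zstep W E (zstage W E T n)"
  by (simp add: zstage_def)

lemma zstage_mono: "m \<le> n \<Longrightarrow> zstage W E T m \<subseteq> zstage W E T n"
  by (rule lift_Suc_mono_le[of "zstage W E T"]) (auto simp: zstage_Suc zstep_def)

lemma finite_bound:
  assumes "finite A" "\<forall>w\<in>A. \<exists>n. w \<in> zstage W E T n"
  shows "\<exists>N. A \<subseteq> zstage W E T N"
  using assms
proof (induction A rule: finite_induct)
  case empty then show ?case by auto
next
  case (insert x F)
  then obtain N where N: "F \<subseteq> zstage W E T N" by auto
  from insert obtain m where m: "x \<in> zstage W E T m" by auto
  have "F \<subseteq> zstage W E T (max N m)" "x \<in> zstage W E T (max N m)"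
    using N m zstage_mono[of N "max N m" W E T] zstage_mono[of m "max N m" W E T] by auto
  thus ?case by auto
qed

lemma closure_in_stages:
  assumes fin: "finite W" and "v \<in> zf_closure W E T"
  shows "\<exists>n. v \<in> zstage W E T n"
  using assms(2)
proof (induction rule: zf_closure.induct)
  case (init v) then show ?case by (intro exI[of _ 0]) (auto simp: zstage_def)
next
  case (force u v)
  then obtain a where a: "u \<in> zstage W E T a" by auto
  let ?A = "{w\<in>W. E u w \<and> w \<noteq> v}"
  have "\<forall>w\<in>?A. \<exists>n. w \<in> zstage W E T n" using force by auto
  moreover have "finite ?A" using fin by auto
  ultimately obtain N where N: "?A \<subseteq> zstage W E T N" using finite_bound[of ?A W E T] by blast
  let ?M = "max a N"
  have "u \<in> zstage W E T ?M" "?A \<subseteq> zstage W E T ?M"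
    using a N zstage_mono[of a ?M W E T] zstage_mono[of N ?M W E T] by auto
  hence "v \<in> zstep W E (zstage W E T ?M)" using force unfolding zstep_def by blast
  thus ?case by (metis zstage_Suc)
qed

lemma part1_aux:
  assumes g: "simple_graph V E" and SV: "S \<subseteq> V"
    and nb: "\<forall>s\<in>S. \<forall>C\<in>components (V - S) E. \<exists>v\<in>C. E s v"
    and Ci: "Ci \<in> components (V - S) E" and Cj: "Cj \<in> components (V - S) E"
    and ne: "Ci \<noteq> Cj" and Ti: "Ci \<inter> T = {}" and Tj: "Cj \<inter> T = {}"
    and v: "v \<in> zf_closure V E T"
  shows "v \<notin> Ci \<union> Cj"
  using v
proof (induction rule: zf_closure.induct)
  case (init v) then show ?case using Ti Tj by auto
next
  case (force u v)
  have sym: "\<forall>x y. E x y \<longrightarrow> E y x" and inV: "\<forall>x y. E x y \<longrightarrow> x \<in> V \<and> y \<in> V"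
    using g unfolding simple_graph_def by auto
  have uV: "u \<in> V" using inV force by blast
  show ?case
  proof
    assume vin: "v \<in> Ci \<union> Cj"
    show False
    proof (cases "u \<in> S")
      case False
      hence "u \<in> V - S" using uV by auto
      moreover have "E v u" using sym force by blast
      ultimately have "u \<in> Ci \<union> Cj" using vin comp_closed[OF Ci, of v u] comp_closed[OF Cj, of v u]
          by blast
      thus False using force by auto
    next
      case True
      obtain C' where C': "C' \<in> {Ci, Cj}" "v \<notin> C'"
      proof (cases "v \<in> Ci")
        case True
        hence "v \<notin> Cj" using comp_eq[OF sym Ci Cj] ne by auto
        thus ?thesis using that by auto
      next
        case False thus ?thesis using that by auto
      qed
      have "C' \<in> components (V - S) E" using C' Ci Cj by auto
      then obtain w where w: "w \<in> C'" "E u w" using nb True by blast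
      have "w \<in> V" "w \<noteq> v" using inV w C' by auto
      hence "w \<notin> Ci \<union> Cj" using force w by blast
      thus False using w C' by auto
    qed
  qed
qed

lemma part1:
  assumes g: "simple_graph V E" and SV: "S \<subseteq> V"
    and nb: "\<forall>s\<in>S. \<forall>C\<in>components (V - S) E. \<exists>v\<in>C. E s v"
    and zf: "zero_forcing_set V E T"
  shows "card {C \<in> components (V - S) E. C \<inter> T \<noteq> {}} \<ge> card (components (V - S) E) - 1"
proof -
  let ?K = "components (V - S) E"
  let ?A = "{C \<in> ?K. C \<inter> T \<noteq> {}}"
  have finV: "finite V" using g simple_graph_def by auto
  have finK: "finite ?K"
    by (rule finite_subset[of _ "Pow (V - S)"]) (use comp_sub finV in auto)
  have "\<forall>a\<in>?K - ?A. \<forall>b\<in>?K - ?A. a = b"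
  proof (intro ballI, rule ccontr)
    fix a b assume a: "a \<in> ?K - ?A" and b: "b \<in> ?K - ?A" and ab: "a \<noteq> b"
    obtain x where x: "x \<in> a" using comp_ne a by blast
    have "x \<in> V" using comp_sub a x by blast
    hence "x \<in> zf_closure V E T" using zf unfolding zero_forcing_set_def by auto
    hence "x \<notin> a \<union> b" using part1_aux[OF g SV nb _ _ ab] a b by auto
    thus False using x by auto
  qed
  moreover have fin2: "finite (?K - ?A)" using finK by blast
  ultimately have "card (?K - ?A) \<le> Suc 0" using card_le_Suc0_iff_eq[OF fin2] by blast
  moreover have "card ?K \<le> card ?A + card (?K - ?A)"
  proof -
    have e: "?A \<union> (?K - ?A) = ?K" by blast
    have "card (?A \<union> (?K - ?A)) \<le> card ?A + card (?K - ?A)" by (rule card_Un_le)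
    thus ?thesis unfolding e .
  qed
  ultimately show ?thesis by linarith
qed

lemma closure_sub: "v \<in> zf_closure W E F \<Longrightarrow> v \<in> W"
  by (induction rule: zf_closure.induct) auto

lemma part2:
  assumes g: "simple_graph V E" and SV: "S \<subseteq> V"
    and zf: "zero_forcing_set V E T"
    and C2: "C2 \<in> components (V - S) E" and T2: "C2 \<inter> T = {}"
  shows "Z C2 E \<le> card S"
proof -
  have sym: "\<forall>x y. E x y \<longrightarrow> E y x" and inV: "\<forall>x y. E x y \<longrightarrow> x \<in> V \<and> y \<in> V"
    and finV: "finite V"
    using g unfolding simple_graph_def by auto
  define st where "st = zstage V E T"
  define P where "P = (\<lambda>s v. \<exists>n. s \<in> st n \<and> E s v \<and> v \<notin> st n \<and> (\<forall>w\<in>V. E s w \<and> w \<noteq> v \<longrightarrow> w \<in> st n))"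
  define F where "F = {v \<in> C2. \<exists>s\<in>S. P s v}"
  have mono: "\<And>m n. m \<le> n \<Longrightarrow> st m \<subseteq> st n" unfolding st_def by (rule zstage_mono)
  have uniq: "v1 = v2" if p1: "P s v1" and p2: "P s v2" for s v1 v2
  proof (rule ccontr)
    assume ne: "v1 \<noteq> v2"
    obtain n1 where n1: "s \<in> st n1" "E s v1" "v1 \<notin> st n1" "\<forall>w\<in>V. E s w \<and> w \<noteq> v1 \<longrightarrow> w \<in> st n1"
      using p1 unfolding P_def by blast
    obtain n2 where n2: "s \<in> st n2" "E s v2" "v2 \<notin> st n2" "\<forall>w\<in>V. E s w \<and> w \<noteq> v2 \<longrightarrow> w \<in> st n2"
      using p2 unfolding P_def by blast
    have v1V: "v1 \<in> V" and v2V: "v2 \<in> V" using inV n1 n2 by blast+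
    show False
    proof (cases "n1 \<le> n2")
      case True
      have "v2 \<in> st n1" using n1(4) v2V n2(2) ne by blast
      thus False using mono[OF True] n2(3) by blast
    next
      case False
      hence "n2 \<le> n1" by simp
      have "v1 \<in> st n2" using n2(4) v1V n1(2) ne by blast
      thus False using mono[OF \<open>n2 \<le> n1\<close>] n1(3) by blast
    qed
  qed
  define gg where "gg = (\<lambda>v. SOME s. s \<in> S \<and> P s v)"
  have gg: "gg v \<in> S \<and> P (gg v) v" if "v \<in> F" for v
    unfolding gg_def by (rule someI_ex) (use that F_def in blast)
  have "inj_on gg F"
  proof (rule inj_onI)
    fix x y assume "x \<in> F" "y \<in> F" "gg x = gg y"
    thus "x = y" using gg[of x] gg[of y] uniq by metis
  qed
  moreover have "gg ` F \<subseteq> S" using gg by blast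
  moreover have "finite S" using SV finV finite_subset by blast
  ultimately have cardF: "card F \<le> card S" by (rule card_inj_on_le)
  have C2sub: "C2 \<subseteq> V - S" using comp_sub C2 by blast
  have inv: "st n \<inter> C2 \<subseteq> zf_closure C2 E F" for n
  proof (induction n)
    case 0
    then show ?case using T2 unfolding st_def zstage_def by auto
  next
    case (Suc n)
    show ?case
    proof
      fix v assume v: "v \<in> st (Suc n) \<inter> C2"
      show "v \<in> zf_closure C2 E F"
      proof (cases "v \<in> st n")
        case True thus ?thesis using Suc v by blast
      next
        case False
        have "v \<in> zstep V E (st n)" using v unfolding st_def by (simp add: zstage_Suc)
        then obtain u where u: "u \<in> st n" "E u v" "\<forall>w\<in>V. E u w \<and> w \<noteq> v \<longrightarrow> w \<in> st n"
          using False unfolding zstep_def by blast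
        have uV: "u \<in> V" using inV u by blast
        show ?thesis
        proof (cases "u \<in> S")
          case True
          hence "P u v" unfolding P_def using u False by blast
          hence "v \<in> F" unfolding F_def using v True by blast
          thus ?thesis using v by (blast intro: zf_closure.init)
        next
          case uS: False
          have "E v u" using sym u by blast
          hence uC: "u \<in> C2" using comp_closed[OF C2, of v u] v uV uS by blast
          hence uc: "u \<in> zf_closure C2 E F" using Suc u by blast
          have "\<forall>w\<in>C2. E u w \<and> w \<noteq> v \<longrightarrow> w \<in> zf_closure C2 E F"
            using u C2sub Suc by blast
          thus ?thesis using zf_closure.force[OF uc _ u(2)] v by blast
        qed
      qed
    qed
  qed
  have "C2 \<subseteq> zf_closure C2 E F"
  proof
    fix x assume x: "x \<in> C2"
    hence "x \<in> V" using C2sub by blast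
    hence "x \<in> zf_closure V E T" using zf unfolding zero_forcing_set_def by blast
    then obtain n where "x \<in> zstage V E T n" using closure_in_stages[OF finV] by blast
    hence "x \<in> st n" unfolding st_def .
    thus "x \<in> zf_closure C2 E F" using inv[of n] x by blast
  qed
  moreover have FC2: "F \<subseteq> C2" unfolding F_def by blast
  moreover have "zf_closure C2 E F \<subseteq> C2"
  proof
    fix v assume "v \<in> zf_closure C2 E F"
    thus "v \<in> C2" by (rule closure_sub)
  qed
  ultimately have zfs: "zero_forcing_set C2 E F"
    unfolding zero_forcing_set_def by blast
  have finC2: "finite C2" using C2sub finV finite_subset by blast
  have "finite {card T | T. zero_forcing_set C2 E T}"
  proof (rule finite_subset[of _ "card ` Pow C2"])
    show "{card T | T. zero_forcing_set C2 E T} \<subseteq> card ` Pow C2"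
    proof
      fix k assume "k \<in> {card T | T. zero_forcing_set C2 E T}"
      then obtain T' where "k = card T'" "T' \<subseteq> C2" unfolding zero_forcing_set_def by blast
      thus "k \<in> card ` Pow C2" by blast
    qed
    show "finite (card ` Pow C2)" using finC2 by simp
  qed
  moreover have "card F \<in> {card T | T. zero_forcing_set C2 E T}"
    using zfs by (intro CollectI exI[of _ F] conjI) auto
  ultimately have "Z C2 E \<le> card F" unfolding Z_def by (rule Min_le)
  thus ?thesis using cardF by linarith
qed

theorem lemma1:
  fixes V S :: "'a set" and E :: "'a \<Rightarrow> 'a \<Rightarrow> bool"
  assumes "simple_graph V E"
    and "connected_on V E"
    and "separating V E S"
    and "\<forall>s\<in>S. \<forall>C\<in>components (V - S) E. \<exists>v\<in>C. E s v"
  shows "(\<forall>T. connected_forcing_set V E T \<longrightarrow>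
           card {C \<in> components (V - S) E. C \<inter> T \<noteq> {}} \<ge> card (components (V - S) E) - 1)
         \<and> (((card (components (V - S) E) = 2 \<and> (\<forall>C\<in>components (V - S) E. Z C E > card S))
               \<or> card (components (V - S) E) \<ge> 3) \<longrightarrow>
             (\<forall>T. connected_forcing_set V E T \<longrightarrow> T \<inter> S \<noteq> {}))"
proof -
  note g = assms(1) and nb = assms(4)
  have SV: "S \<subseteq> V" using assms(3) unfolding separating_def by blast
  have sym: "\<forall>x y. E x y \<longrightarrow> E y x" and finV: "finite V"
    using g unfolding simple_graph_def by auto
  let ?K = "components (V - S) E"
  let ?A = "\<lambda>T. {C \<in> ?K. C \<inter> T \<noteq> {}}"
  have finK: "finite ?K"
    by (rule finite_subset[of _ "Pow (V - S)"]) (use comp_sub finV in auto)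
  have P1: "\<forall>T. connected_forcing_set V E T \<longrightarrow> card (?A T) \<ge> card ?K - 1"
  proof (intro allI impI)
    fix T assume "connected_forcing_set V E T"
    hence "zero_forcing_set V E T" unfolding connected_forcing_set_def by blast
    thus "card (?A T) \<ge> card ?K - 1" by (rule part1[OF g SV nb])
  qed
  have P2: "T \<inter> S \<noteq> {}"
    if cond: "(card ?K = 2 \<and> (\<forall>C\<in>?K. Z C E > card S)) \<or> card ?K \<ge> 3"
      and cfs: "connected_forcing_set V E T" for T
  proof
    assume TS: "T \<inter> S = {}"
    have zf: "zero_forcing_set V E T" and co: "connected_on T E"
      using cfs unfolding connected_forcing_set_def by auto
    have TV: "T \<subseteq> V" using zf unfolding zero_forcing_set_def by blast
    have "T \<noteq> {}" using co unfolding connected_on_def by blast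
    then obtain t0 where t0: "t0 \<in> T" by blast
    define C0 where "C0 = {y. (t0, y) \<in> (edges_in (V - S) E)\<^sup>*}"
    have t0VS: "t0 \<in> V - S" using t0 TV TS by blast
    have C0K: "C0 \<in> ?K" unfolding C0_def components_def
      using t0VS by (intro CollectI exI[of _ t0] conjI) auto
    have "edges_in T E \<subseteq> edges_in (V - S) E" using TV TS unfolding edges_in_def by auto
    hence R: "(edges_in T E)\<^sup>* \<subseteq> (edges_in (V - S) E)\<^sup>*" by (rule rtrancl_mono)
    have TC0: "T \<subseteq> C0"
    proof
      fix t assume "t \<in> T"
      hence "(t0, t) \<in> (edges_in T E)\<^sup>*" using co t0 unfolding connected_on_def by blast
      thus "t \<in> C0" using R unfolding C0_def by blast
    qed
    have onlyC0: "C = C0" if CK: "C \<in> ?K" and CT: "C \<inter> T \<noteq> {}" for C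
    proof -
      obtain x where "x \<in> C" "x \<in> T" using CT by blast
      thus ?thesis using comp_eq[OF sym CK C0K] TC0 by blast
    qed
    have "?A T \<subseteq> {C0}" using onlyC0 by blast
    hence "card (?A T) \<le> card {C0}" by (intro card_mono) auto
    hence cA: "card (?A T) \<le> 1" by simp
    show False
    proof (cases "card ?K \<ge> 3")
      case True
      moreover have "card (?A T) \<ge> card ?K - 1" using P1 cfs by blast
      ultimately show False using cA by linarith
    next
      case False
      hence k2: "card ?K = 2" and zc: "\<forall>C\<in>?K. Z C E > card S" using cond by auto
      have "\<not> ?K \<subseteq> {C0}"
      proof
        assume "?K \<subseteq> {C0}"
        hence "card ?K \<le> card {C0}" by (intro card_mono) auto
        thus False using k2 by simp
      qed
      then obtain C2 where C2: "C2 \<in> ?K" "C2 \<noteq> C0" by blast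
      have "C2 \<inter> T = {}"
      proof (rule ccontr)
        assume "C2 \<inter> T \<noteq> {}"
        hence "C2 = C0" using onlyC0[OF C2(1)] by blast
        thus False using C2(2) by blast
      qed
      hence "Z C2 E \<le> card S" by (rule part2[OF g SV zf C2(1)])
      moreover have "Z C2 E > card S" using zc C2(1) by blast
      ultimately show False by linarith
    qed
  qed
  show ?thesis
  proof (intro conjI impI allI)
    fix T assume "connected_forcing_set V E T"
    thus "card (?A T) \<ge> card ?K - 1" using P1 by blast
  next
    fix T assume c: "(card ?K = 2 \<and> (\<forall>C\<in>?K. Z C E > card S)) \<or> card ?K \<ge> 3"
      and "connected_forcing_set V E T"
    thus "T \<inter> S \<noteq> {}" by (rule P2)
  qed
qed

end
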